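(* Let $\mathcal{H}$ be a real Hilbert space, $N\ge2$, $A_1,\dots,A_N:\mathcal{H}\rightrightarrows\mathcal{H}$ maximally monotone, $\theta\in(0,1)$, and $\Gamma\subseteq\mathbb{R}_{++}$ a nonempty closed interval. For $\gamma\in\Gamma$ let $T_\gamma:\mathcal{H}^{N-1}\to\mathcal{H}^{N-1}$ be the Malitsky--Tam operator and, for $\gamma,\delta\in\mathbb{R}_{++}$, let $\tilde{\mathcal{Q}}_{\delta\leftarrow\gamma}$ be the relocator, both defined in the context. Then for any nonempty bounded set $S\subseteq\bigcup_{\gamma\in\Gamma}(\operatorname{Fix}T_\gamma\times\{\gamma\})$ there exists $L\ge0$ with $\|\tilde{\mathcal{Q}}_{\delta\leftarrow\gamma}\mathbf{x}-\tilde{\mathcal{Q}}_{\gamma\leftarrow\gamma}\mathbf{x}\|\le L|\delta-\gamma|$ for all $\delta\in\Gamma$ and all $(\mathbf{x},\gamma)\in S$.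
   Context: $J_A=(\mathrm{Id}+A)^{-1}$. Malitsky--Tam operator: for $\mathbf{x}=(x^1,\dots,x^{N-1})\in\mathcal{H}^{N-1}$, set $z^1=J_{\gamma A_1}x^1$, $z^i=J_{\gamma A_i}(z^{i-1}+x^i-x^{i-1})$ for $i=2,\dots,N-1$, $z^N=J_{\gamma A_N}(z^1+z^{N-1}-x^{N-1})$, and $T_\gamma\mathbf{x}=\mathbf{x}+\theta(z^2-z^1,\dots,z^N-z^{N-1})$. Relocator: $\tilde{\mathcal{Q}}^1_{\delta\leftarrow\gamma}\mathbf{x}=\frac{\delta}{\gamma}x^1+(1-\frac{\delta}{\gamma})J_{\gamma A_1}x^1$ and $\tilde{\mathcal{Q}}^i_{\delta\leftarrow\gamma}\mathbf{x}=\frac{\delta}{\gamma}(x^i-x^1)+\tilde{\mathcal{Q}}^1_{\delta\leftarrow\gamma}\mathbf{x}$ for $i=2,\dots,N-1$; $\tilde{\mathcal{Q}}_{\delta\leftarrow\gamma}=(\tilde{\mathcal{Q}}^1_{\delta\leftarrow\gamma},\dots,\tilde{\mathcal{Q}}^{N-1}_{\delta\leftarrow\gamma})$. $\mathcal{H}^{N-1}$ carries the product Hilbert norm. *)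

theory Defs
  imports "HOL-Analysis.Analysis"
begin

definition monotone_op :: "('a::real_inner \<Rightarrow> 'a set) \<Rightarrow> bool" where
  "monotone_op A \<longleftrightarrow> (\<forall>x y u v. u \<in> A x \<longrightarrow> v \<in> A y \<longrightarrow> inner (x - y) (u - v) \<ge> 0)"

definition max_monotone :: "('a::real_inner \<Rightarrow> 'a set) \<Rightarrow> bool" where
  "max_monotone A \<longleftrightarrow> monotone_op A \<and>
     (\<forall>x u. (\<forall>y v. v \<in> A y \<longrightarrow> inner (x - y) (u - v) \<ge> 0) \<longrightarrow> u \<in> A x)"

text \<open>Resolvent J_{gamma A} = (Id + gamma A)^{-1}: the point z with x \<in> z + gamma A z
  (unique and existing for maximally monotone A and gamma > 0, by Minty).\<close>
definition resolvent :: "real \<Rightarrow> ('a::real_inner \<Rightarrow> 'a set) \<Rightarrow> 'a \<Rightarrow> 'a" where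
  "resolvent \<gamma> A x = (THE z. \<exists>u \<in> A z. x = z + \<gamma> *\<^sub>R u)"

text \<open>Points of H^{N-1} are functions nat \<Rightarrow> 'a, only indices 1..N-1 are relevant.
  mt_z computes z^1,...,z^{N-1} (index i), recursively.\<close>
fun mt_zr :: "(nat \<Rightarrow> 'a::real_inner \<Rightarrow> 'a set) \<Rightarrow> real \<Rightarrow> (nat \<Rightarrow> 'a) \<Rightarrow> nat \<Rightarrow> 'a" where
  "mt_zr A \<gamma> x 0 = 0"
| "mt_zr A \<gamma> x (Suc i) =
     (if i = 0 then resolvent \<gamma> (A 1) (x 1)
      else resolvent \<gamma> (A (Suc i)) (mt_zr A \<gamma> x i + x (Suc i) - x i))"

definition mt_z :: "nat \<Rightarrow> (nat \<Rightarrow> 'a::real_inner \<Rightarrow> 'a set) \<Rightarrow> real \<Rightarrow> (nat \<Rightarrow> 'a) \<Rightarrow> nat \<Rightarrow> 'a" where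
  "mt_z N A \<gamma> x i =
     (if i = N then resolvent \<gamma> (A N) (mt_zr A \<gamma> x 1 + mt_zr A \<gamma> x (N - 1) - x (N - 1))
      else mt_zr A \<gamma> x i)"

definition mt_op :: "nat \<Rightarrow> (nat \<Rightarrow> 'a::real_inner \<Rightarrow> 'a set) \<Rightarrow> real \<Rightarrow> real \<Rightarrow> (nat \<Rightarrow> 'a) \<Rightarrow> nat \<Rightarrow> 'a" where
  "mt_op N A \<theta> \<gamma> x i = x i + \<theta> *\<^sub>R (mt_z N A \<gamma> x (Suc i) - mt_z N A \<gamma> x i)"

definition mt_fix :: "nat \<Rightarrow> (nat \<Rightarrow> 'a::real_inner \<Rightarrow> 'a set) \<Rightarrow> real \<Rightarrow> real \<Rightarrow> (nat \<Rightarrow> 'a) set" where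
  "mt_fix N A \<theta> \<gamma> = {x. \<forall>i\<in>{1..N-1}. mt_op N A \<theta> \<gamma> x i = x i}"

definition reloc :: "(nat \<Rightarrow> 'a::real_inner \<Rightarrow> 'a set) \<Rightarrow> real \<Rightarrow> real \<Rightarrow> (nat \<Rightarrow> 'a) \<Rightarrow> nat \<Rightarrow> 'a" where
  "reloc A \<delta> \<gamma> x i =
     (let q1 = (\<delta> / \<gamma>) *\<^sub>R x 1 + (1 - \<delta> / \<gamma>) *\<^sub>R resolvent \<gamma> (A 1) (x 1)
      in if i = 1 then q1 else (\<delta> / \<gamma>) *\<^sub>R (x i - x 1) + q1)"

definition pnorm :: "nat \<Rightarrow> (nat \<Rightarrow> 'a::real_normed_vector) \<Rightarrow> real" where
  "pnorm N x = sqrt (\<Sum>i\<in>{1..N-1}. (norm (x i))\<^sup>2)"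

end

theory Submission
  imports Defs
begin



lemma arith1: fixes m::real shows "m \<le> (rn + rk)/2 + (pX + pU)/8 \<Longrightarrow> rn + (xn+un)/2 < m + a \<Longrightarrow> rk + (xk+uk)/2 < m + b \<Longrightarrow> dX + pX = 2*xn+2*xk \<Longrightarrow> dU + pU = 2*un+2*uk \<Longrightarrow> dX + dU \<le> 4*(a+b)" by argo

lemma sq_exp: fixes a w :: "'a::real_inner"
  shows "(norm (a + t *\<^sub>R w))\<^sup>2 = (norm a)\<^sup>2 + 2 * t * inner a w + t\<^sup>2 * (norm w)\<^sup>2"
proof -
  have "(norm (a + t *\<^sub>R w))\<^sup>2 = inner (a + t *\<^sub>R w) (a + t *\<^sub>R w)" by (simp add: power2_norm_eq_inner)
  also have "\<dots> = inner a a + 2 * t * inner a w + t\<^sup>2 * inner w w"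
    by (simp add: inner_add_left inner_add_right inner_commute power2_eq_square algebra_simps)
  finally show ?thesis by (simp add: power2_norm_eq_inner)
qed

lemma minty0:
  fixes B :: "'a::{real_inner,complete_space} \<Rightarrow> 'a set"
  assumes "max_monotone B"
  shows "\<exists>a. -a \<in> B a"
proof -
  have mono: "\<And>x y u v. u \<in> B x \<Longrightarrow> v \<in> B y \<Longrightarrow> inner (x - y) (u - v) \<ge> 0"
    using assms unfolding max_monotone_def monotone_op_def by blast
  have maxi: "\<And>x u. (\<And>y v. v \<in> B y \<Longrightarrow> inner (x - y) (u - v) \<ge> 0) \<Longrightarrow> u \<in> B x"
    using assms unfolding max_monotone_def by blast
  define D where "D = {(x::'a, u::'a, r::real). \<forall>y v. v \<in> B y \<longrightarrow> inner x v + inner y u - inner y v \<le> r}"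
  define val where "val = (\<lambda>(x::'a, u::'a, r::real). r + ((norm x)\<^sup>2 + (norm u)\<^sup>2) / 2)"
  have qle: "inner x u \<le> r" if "(x, u, r) \<in> D" for x u r
  proof (rule ccontr)
    assume "\<not> inner x u \<le> r"
    then have "\<forall>y v. v \<in> B y \<longrightarrow> inner (x - y) (u - v) > 0"
    proof (intro allI impI)
      fix y v assume "v \<in> B y"
      then have "inner x v + inner y u - inner y v \<le> r" using that unfolding D_def by auto
      then show "inner (x - y) (u - v) > 0" using \<open>\<not> inner x u \<le> r\<close>
        by (simp add: inner_diff_left inner_diff_right)
    qed
    then have "u \<in> B x" using maxi by (meson less_imp_le)
    then have "inner x u + inner x u - inner x u \<le> r" using that unfolding D_def by blast
    then show False using \<open>\<not> inner x u \<le> r\<close> by simp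
  qed
  have val_nn: "val p \<ge> 0" if "p \<in> D" for p
  proof -
    obtain x u r where p: "p = (x, u, r)" by (cases p) auto
    have "0 \<le> (norm (x + u))\<^sup>2" by simp
    also have "\<dots> = (norm x)\<^sup>2 + (norm u)\<^sup>2 + 2 * inner x u"
      by (simp add: power2_norm_eq_inner inner_add_left inner_add_right inner_commute)
    finally have h: "0 \<le> (norm x)\<^sup>2 + (norm u)\<^sup>2 + 2 * inner x u" .
    have "inner x u \<le> r" using qle[of x u r] that p by simp
    then have "0 \<le> r + ((norm x)\<^sup>2 + (norm u)\<^sup>2) / 2" using h by (simp add: field_simps)
    then show ?thesis using p unfolding val_def by simp
  qed
  have conv: "((1 - t) *\<^sub>R x + t *\<^sub>R x', (1 - t) *\<^sub>R u + t *\<^sub>R u', (1 - t) * r + t * r') \<in> D"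
    if "(x, u, r) \<in> D" "(x', u', r') \<in> D" "0 \<le> t" "t \<le> 1" for x u r x' u' r' t
  proof -
    { fix y v assume yv: "v \<in> B y"
      have a: "inner x v + inner y u - inner y v \<le> r" using that(1) yv unfolding D_def by auto
      have b: "inner x' v + inner y u' - inner y v \<le> r'" using that(2) yv unfolding D_def by auto
      have "inner ((1 - t) *\<^sub>R x + t *\<^sub>R x') v + inner y ((1 - t) *\<^sub>R u + t *\<^sub>R u') - inner y v
         = (1 - t) * (inner x v + inner y u - inner y v) + t * (inner x' v + inner y u' - inner y v)"
        by (simp add: inner_add_left inner_add_right algebra_simps)
      also have "\<dots> \<le> (1 - t) * r + t * r'"
        using a b that(3,4) by (intro add_mono mult_left_mono) auto
      finally have "inner ((1 - t) *\<^sub>R x + t *\<^sub>R x') v + inner y ((1 - t) *\<^sub>R u + t *\<^sub>R u') - inner y v \<le> (1 - t) * r + t * r'" . }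
    then show ?thesis unfolding D_def by auto
  qed
  obtain y0 v0 where y0: "v0 \<in> B y0"
  proof -
    { assume "\<forall>y v. v \<notin> B y"
      then have "(0::'a) \<in> B 0" using maxi by blast
      then have False using \<open>\<forall>y v. v \<notin> B y\<close> by blast }
    then show ?thesis using that by blast
  qed
  have graphD: "(y, v, inner y v) \<in> D" if "v \<in> B y" for y v
  proof -
    { fix y' v' assume "v' \<in> B y'"
      then have "inner (y - y') (v - v') \<ge> 0" using mono that by blast
      then have "inner y v' + inner y' v - inner y' v' \<le> inner y v"
        by (simp add: inner_diff_left inner_diff_right inner_commute) }
    then show ?thesis unfolding D_def by auto
  qed
  define m where "m = Inf (val ` D)"
  have Dne: "D \<noteq> {}" using graphD[OF y0] by auto
  have bdd: "bdd_below (val ` D)" unfolding bdd_below_def using val_nn by blast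
  have m_le: "m \<le> val p" if "p \<in> D" for p
    unfolding m_def using bdd that by (auto intro: cInf_lower)
  have "\<forall>n::nat. \<exists>p. p \<in> D \<and> val p < m + 1 / real (Suc n)"
  proof
    fix n :: nat
    have "Inf (val ` D) < m + 1 / real (Suc n)" unfolding m_def by simp
    then obtain w where "w \<in> val ` D" "w < m + 1 / real (Suc n)"
      using cInf_lessD[of "val ` D"] Dne by blast
    then show "\<exists>p. p \<in> D \<and> val p < m + 1 / real (Suc n)" by auto
  qed
  then obtain P where P: "\<And>n. P n \<in> D" "\<And>n. val (P n) < m + 1 / real (Suc n)"
    by metis
  define X where "X = (\<lambda>n. fst (P n))"
  define U where "U = (\<lambda>n. fst (snd (P n)))"
  define R where "R = (\<lambda>n. snd (snd (P n)))"
  have PD: "(X n, U n, R n) \<in> D" for n using P(1)[of n] by (simp add: X_def U_def R_def)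
  have Pv: "R n + ((norm (X n))\<^sup>2 + (norm (U n))\<^sup>2) / 2 < m + 1 / real (Suc n)" for n
    using P(2)[of n] by (simp add: X_def U_def R_def val_def split: prod.splits)
  have close: "(norm (X n - X k))\<^sup>2 + (norm (U n - U k))\<^sup>2 \<le> 4 * (1 / real (Suc n) + 1 / real (Suc k))" for n k
  proof -
    have "((1 - 1/2) *\<^sub>R X n + (1/2) *\<^sub>R X k, (1 - 1/2) *\<^sub>R U n + (1/2) *\<^sub>R U k, (1 - 1/2) * R n + (1/2) * R k) \<in> D"
      by (rule conv[OF PD PD]) auto
    from m_le[OF this] have h: "m \<le> (R n + R k) / 2 + ((norm ((1/2) *\<^sub>R (X n + X k)))\<^sup>2 + (norm ((1/2) *\<^sub>R (U n + U k)))\<^sup>2) / 2"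
      by (simp add: val_def scaleR_add_right add_divide_distrib)
    have par: "(norm (a + b))\<^sup>2 + (norm (a - b))\<^sup>2 = 2 * (norm a)\<^sup>2 + 2 * (norm b)\<^sup>2" for a b :: 'a
      by (simp add: power2_norm_eq_inner inner_add_left inner_add_right inner_diff_left inner_diff_right inner_commute)
    have e1: "(norm ((1/2) *\<^sub>R (a + b)))\<^sup>2 = (norm (a + b))\<^sup>2 / 4" for a b :: 'a
      by (simp add: power2_eq_square)
    have h2: "m \<le> (R n + R k) / 2 + ((norm (X n + X k))\<^sup>2 + (norm (U n + U k))\<^sup>2) / 8"
      using h e1[of "X n" "X k"] e1[of "U n" "U k"] by argo
    show ?thesis by (rule arith1[OF h2 Pv[of n] Pv[of k] par[of "X n" "X k", THEN trans[OF add.commute]] par[of "U n" "U k", THEN trans[OF add.commute]]])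
  qed
  have cauchyXU: "Cauchy X \<and> Cauchy U"
  proof -
    { fix e :: real assume e: "e > 0"
      obtain M :: nat where M: "8 / e\<^sup>2 < real M" using reals_Archimedean2 by blast
      have "\<forall>n\<ge>M. \<forall>k\<ge>M. dist (X n) (X k) < e \<and> dist (U n) (U k) < e"
      proof (intro allI impI)
        fix n k assume nk: "M \<le> n" "M \<le> k"
        have "1 / real (Suc n) \<le> 1 / real (Suc M)" "1 / real (Suc k) \<le> 1 / real (Suc M)"
          using nk by (auto simp: frac_le)
        moreover have "8 / real (Suc M) < e\<^sup>2" using M e
          by (simp add: field_simps) (smt (verit, ccfv_SIG) mult_less_cancel_right2 zero_less_power)
        moreover have "8 / real (Suc M) = 8 * (1 / real (Suc M))" by simp
        ultimately have "4 * (1 / real (Suc n) + 1 / real (Suc k)) < e\<^sup>2" by argo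
        then have "(norm (X n - X k))\<^sup>2 < e\<^sup>2" "(norm (U n - U k))\<^sup>2 < e\<^sup>2"
          using close[of n k] by (smt (verit) zero_le_power2)+
        then show "dist (X n) (X k) < e \<and> dist (U n) (U k) < e"
          using e by (simp add: dist_norm power_less_imp_less_base)
      qed
      then have "\<exists>M. \<forall>n\<ge>M. \<forall>k\<ge>M. dist (X n) (X k) < e \<and> dist (U n) (U k) < e" by blast }
    then show ?thesis unfolding Cauchy_def by meson
  qed
  then obtain x0 u0 where lim: "X \<longlonglongrightarrow> x0" "U \<longlonglongrightarrow> u0"
    using Cauchy_convergent_iff convergent_def by metis
  define r0 where "r0 = m - ((norm x0)\<^sup>2 + (norm u0)\<^sup>2) / 2"
  have p0D: "(x0, u0, r0) \<in> D"
  proof -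
    { fix y v assume yv: "v \<in> B y"
      have ge: "0 \<le> m + 1 / real (Suc n) - ((norm (X n))\<^sup>2 + (norm (U n))\<^sup>2) / 2 - (inner (X n) v + inner y (U n) - inner y v)" for n
        using PD[of n] Pv[of n] yv unfolding D_def by fastforce
      have "(\<lambda>n. m + 1 / real (Suc n) - ((norm (X n))\<^sup>2 + (norm (U n))\<^sup>2) / 2 - (inner (X n) v + inner y (U n) - inner y v))
           \<longlonglongrightarrow> m + 0 - ((norm x0)\<^sup>2 + (norm u0)\<^sup>2) / 2 - (inner x0 v + inner y u0 - inner y v)"
        by (intro tendsto_intros lim LIMSEQ_inverse_real_of_nat[unfolded inverse_eq_divide]) simp_all
      then have "0 \<le> m + 0 - ((norm x0)\<^sup>2 + (norm u0)\<^sup>2) / 2 - (inner x0 v + inner y u0 - inner y v)"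
        using ge by (intro LIMSEQ_le_const) auto
      then have "inner x0 v + inner y u0 - inner y v \<le> r0" unfolding r0_def by simp }
    then show ?thesis unfolding D_def by auto
  qed
  have var: "0 \<le> inner y v - r0 + inner x0 (y - x0) + inner u0 (v - u0)" if yv: "v \<in> B y" for y v
  proof -
    define c where "c = inner y v - r0 + inner x0 (y - x0) + inner u0 (v - u0)"
    define K where "K = ((norm (y - x0))\<^sup>2 + (norm (v - u0))\<^sup>2) / 2"
    have K0: "K \<ge> 0" unfolding K_def by simp
    have step: "0 \<le> c + t * K" if t: "0 < t" "t \<le> 1" for t
    proof -
      have inD: "((1 - t) *\<^sub>R x0 + t *\<^sub>R y, (1 - t) *\<^sub>R u0 + t *\<^sub>R v, (1 - t) * r0 + t * inner y v) \<in> D"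
        by (rule conv[OF p0D graphD[OF yv]]) (use t in auto)
      have e: "(norm ((1 - t) *\<^sub>R a + t *\<^sub>R b))\<^sup>2 = (norm a)\<^sup>2 + 2 * t * inner a (b - a) + t\<^sup>2 * (norm (b - a))\<^sup>2" for a b :: 'a
      proof -
        have "(1 - t) *\<^sub>R a + t *\<^sub>R b = a + t *\<^sub>R (b - a)" by (simp add: algebra_simps)
        then show ?thesis using sq_exp[of a t "b - a"] by simp
      qed
      have "m \<le> (1 - t) * r0 + t * inner y v + ((norm ((1 - t) *\<^sub>R x0 + t *\<^sub>R y))\<^sup>2 + (norm ((1 - t) *\<^sub>R u0 + t *\<^sub>R v))\<^sup>2) / 2"
        using m_le[OF inD] by (simp add: val_def)
      also have "\<dots> = m + t * c + t\<^sup>2 * K"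
        unfolding e c_def K_def r0_def by (simp add: field_simps inner_diff_right dot_square_norm power2_eq_square)
      finally have "0 \<le> t * (c + t * K)" by (simp add: algebra_simps power2_eq_square)
      then show ?thesis using t by (simp add: zero_le_mult_iff)
    qed
    show ?thesis
    proof (rule ccontr)
      assume "\<not> ?thesis"
      then have c: "c < 0" unfolding c_def by simp
      define t where "t = min 1 (- c / (K + 1))"
      have "- c / (K + 1) > 0" using c K0 by (intro divide_pos_pos) auto
      then have t: "0 < t" "t \<le> 1" unfolding t_def by auto
      have "t * K \<le> (- c / (K + 1)) * K" using K0 unfolding t_def by (intro mult_right_mono) auto
      also have "\<dots> = (- c) * (K / (K + 1))" by simp
      also have "\<dots> < (- c) * 1"
        using c K0 by (intro mult_strict_left_mono) auto
      finally have "c + t * K < 0" by simp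
      then show False using step[OF t] by simp
    qed
  qed
  have r0q: "inner x0 u0 \<le> r0" using qle[OF p0D] .
  have key: "(norm (x0 + u0))\<^sup>2 \<le> inner (y + u0) (v + x0)" if "v \<in> B y" for y v
  proof -
    have a1: "(norm (x0 + u0))\<^sup>2 = inner x0 x0 + inner u0 u0 + 2 * inner x0 u0"
      by (simp add: power2_norm_eq_inner inner_add_left inner_add_right inner_commute)
    have a2: "inner (y + u0) (v + x0) = inner y v + inner x0 y + inner u0 v + inner x0 u0"
      by (simp add: inner_add_left inner_add_right inner_commute)
    have a3: "inner x0 (y - x0) = inner x0 y - inner x0 x0" "inner u0 (v - u0) = inner u0 v - inner u0 u0"
      by (simp_all add: inner_diff_right)
    show ?thesis using var[OF that] r0q a1 a2 a3 by linarith
  qed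
  have inB: "- x0 \<in> B (- u0)"
  proof (rule maxi)
    fix y v assume "v \<in> B y"
    from key[OF this] have "0 \<le> inner (y + u0) (v + x0)" using zero_le_power2[of "norm (x0 + u0)"] by linarith
    moreover have "inner (- u0 - y) (- x0 - v) = inner (y + u0) (v + x0)"
    proof -
      have h: "- u0 - y = - (y + u0)" "- x0 - v = - (v + x0)" by simp_all
      show ?thesis unfolding h by (simp only: inner_minus_left inner_minus_right minus_minus)
    qed
    ultimately show "0 \<le> inner (- u0 - y) (- x0 - v)" by simp
  qed
  have "inner (- u0 + u0) (- x0 + x0) = 0" by simp
  then have "(norm (x0 + u0))\<^sup>2 \<le> 0" using key[OF inB] by linarith
  then have "norm (x0 + u0) = 0" by simp
  then have "x0 + u0 = 0" by simp
  then have "- x0 = u0" by (simp add: add_eq_0_iff)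
  then show ?thesis using inB by (intro exI[of _ "- u0"]) simp
qed


lemma resolvent_prop:
  fixes A :: "'a::{real_inner,complete_space} \<Rightarrow> 'a set"
  assumes mm: "max_monotone A" and g: "\<gamma> > 0"
  shows "\<exists>u\<in>A (resolvent \<gamma> A x). x = resolvent \<gamma> A x + \<gamma> *\<^sub>R u"
proof -
  have mono: "\<And>x y u v. u \<in> A x \<Longrightarrow> v \<in> A y \<Longrightarrow> inner (x - y) (u - v) \<ge> 0"
    using mm unfolding max_monotone_def monotone_op_def by blast
  have maxi: "\<And>x u. (\<And>y v. v \<in> A y \<Longrightarrow> inner (x - y) (u - v) \<ge> 0) \<Longrightarrow> u \<in> A x"
    using mm unfolding max_monotone_def by blast
  define B where "B = (\<lambda>a. (\<lambda>u. \<gamma> *\<^sub>R u) ` A (a + x))"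
  have "max_monotone B"
    unfolding max_monotone_def monotone_op_def
  proof (intro conjI allI impI)
    fix a b u v assume "u \<in> B a" "v \<in> B b"
    then obtain u' v' where u': "u' \<in> A (a + x)" "u = \<gamma> *\<^sub>R u'" and v': "v' \<in> A (b + x)" "v = \<gamma> *\<^sub>R v'"
      unfolding B_def by auto
    have "0 \<le> inner ((a + x) - (b + x)) (u' - v')" using mono[OF u'(1) v'(1)] .
    then have "0 \<le> \<gamma> * inner (a - b) (u' - v')" using g by simp
    then show "0 \<le> inner (a - b) (u - v)" using u'(2) v'(2)
      by (simp add: scaleR_diff_right[symmetric])
  next
    fix a u assume H: "\<forall>b v. v \<in> B b \<longrightarrow> 0 \<le> inner (a - b) (u - v)"
    have "(1 / \<gamma>) *\<^sub>R u \<in> A (a + x)"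
    proof (rule maxi)
      fix y v assume yv: "v \<in> A y"
      have "\<gamma> *\<^sub>R v \<in> B (y - x)" unfolding B_def using yv by auto
      with H have h: "0 \<le> inner (a - (y - x)) (u - \<gamma> *\<^sub>R v)" by blast
      have "inner (a + x - y) ((1 / \<gamma>) *\<^sub>R u - v) = (1 / \<gamma>) * inner (a - (y - x)) (u - \<gamma> *\<^sub>R v)"
        using g by (simp add: inner_diff_right algebra_simps)
      then show "0 \<le> inner (a + x - y) ((1 / \<gamma>) *\<^sub>R u - v)" using h g by simp
    qed
    then have "\<gamma> *\<^sub>R ((1 / \<gamma>) *\<^sub>R u) \<in> B a" unfolding B_def by blast
    then show "u \<in> B a" using g by simp
  qed
  from minty0[OF this] obtain a where "- a \<in> B a" by blast
  then obtain u where u: "u \<in> A (a + x)" "- a = \<gamma> *\<^sub>R u" unfolding B_def by auto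
  define z where "z = a + x"
  have gu: "\<gamma> *\<^sub>R u = - a" using u(2) by simp
  have ex: "\<exists>u\<in>A z. x = z + \<gamma> *\<^sub>R u" using u(1) unfolding z_def
    by (intro bexI[of _ u]) (simp_all add: gu)
  have uniq: "z' = z" if zz: "\<exists>u\<in>A z'. x = z' + \<gamma> *\<^sub>R u" for z'
  proof -
    obtain u1 where u1: "u1 \<in> A z" "x = z + \<gamma> *\<^sub>R u1" using ex by blast
    obtain u2 where u2: "u2 \<in> A z'" "x = z' + \<gamma> *\<^sub>R u2" using zz by blast
    have e: "z + \<gamma> *\<^sub>R u1 = z' + \<gamma> *\<^sub>R u2" using u1(2) u2(2) by simp
    have "z' - z = (z' + \<gamma> *\<^sub>R u2) - \<gamma> *\<^sub>R u2 - z" by simp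
    also have "\<dots> = (z + \<gamma> *\<^sub>R u1) - \<gamma> *\<^sub>R u2 - z" by (simp only: e)
    also have "\<dots> = \<gamma> *\<^sub>R (u1 - u2)" by (simp add: scaleR_diff_right)
    finally have d: "z' - z = \<gamma> *\<^sub>R (u1 - u2)" .
    have "0 \<le> inner (z' - z) (u2 - u1)" using mono[OF u2(1) u1(1)] .
    also have "\<dots> = - \<gamma> * (norm (u1 - u2))\<^sup>2" unfolding d
      by (simp add: power2_norm_eq_inner inner_diff_right inner_diff_left inner_commute algebra_simps)
    finally have "(norm (u1 - u2))\<^sup>2 \<le> 0" using g
      by (simp add: mult_le_0_iff zero_le_mult_iff)
    then have "u1 = u2" by simp
    then show ?thesis using d by simp
  qed
  have "resolvent \<gamma> A x = z" unfolding resolvent_def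
  proof (rule the_equality)
    show "\<exists>u\<in>A z. x = z + \<gamma> *\<^sub>R u" by (rule ex)
  next
    fix z' assume "\<exists>u\<in>A z'. x = z' + \<gamma> *\<^sub>R u"
    then show "z' = z" by (rule uniq)
  qed
  then show ?thesis using ex by simp
qed

lemma resolvent_bound:
  fixes A :: "'a::{real_inner,complete_space} \<Rightarrow> 'a set"
  assumes mm: "max_monotone A" and g: "\<gamma> > 0" and yv: "v0 \<in> A y0"
  shows "norm (resolvent \<gamma> A x - y0) \<le> norm (x - y0 - \<gamma> *\<^sub>R v0)"
proof -
  have mono: "\<And>x y u v. u \<in> A x \<Longrightarrow> v \<in> A y \<Longrightarrow> inner (x - y) (u - v) \<ge> 0"
    using mm unfolding max_monotone_def monotone_op_def by blast
  obtain u where u: "u \<in> A (resolvent \<gamma> A x)" "x = resolvent \<gamma> A x + \<gamma> *\<^sub>R u"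
    using resolvent_prop[OF mm g] by blast
  define z where "z = resolvent \<gamma> A x"
  define w where "w = z - y0"
  define q where "q = x - y0 - \<gamma> *\<^sub>R v0"
  have "0 \<le> inner w (u - v0)" using mono[OF u(1) yv] unfolding w_def z_def .
  then have "0 \<le> \<gamma> * inner w (u - v0)" using g by simp
  also have "\<gamma> * inner w (u - v0) = inner w (q - w)"
  proof -
    have "q - w = x - z - \<gamma> *\<^sub>R v0" unfolding q_def w_def by simp
    also have "\<dots> = (z + \<gamma> *\<^sub>R u) - z - \<gamma> *\<^sub>R v0" using u(2) unfolding z_def by simp
    also have "\<dots> = \<gamma> *\<^sub>R (u - v0)" by (simp add: scaleR_diff_right)
    finally have "q - w = \<gamma> *\<^sub>R (u - v0)" .
    then show ?thesis by simp
  qed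
  finally have "inner w w \<le> inner w q" by (simp add: inner_diff_right)
  also have "\<dots> \<le> norm w * norm q" by (rule norm_cauchy_schwarz)
  finally have h: "norm w * norm w \<le> norm w * norm q" by (simp only: inner_real_def norm_eq_sqrt_inner) (simp add: dot_square_norm[symmetric] power2_eq_square[symmetric])
  have "norm w \<le> norm q"
  proof (cases "norm w = 0")
    case True then show ?thesis by simp
  next
    case False then have "norm w > 0" by simp
    then show ?thesis using h by simp
  qed
  then show ?thesis unfolding w_def q_def z_def .
qed


lemma reloc_diff:
  fixes A :: "nat \<Rightarrow> 'a::real_inner \<Rightarrow> 'a set"
  assumes g: "\<gamma> \<noteq> 0"
  shows "reloc A \<delta> \<gamma> x i - reloc A \<gamma> \<gamma> x i = ((\<delta> - \<gamma>) / \<gamma>) *\<^sub>R (x i - resolvent \<gamma> (A 1) (x 1))"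
proof -
  define J where "J = resolvent \<gamma> (A 1) (x 1)"
  define c where "c = \<delta> / \<gamma>"
  have c1: "(\<delta> - \<gamma>) / \<gamma> = c - 1" unfolding c_def using g by (simp add: field_simps)
  have q1: "c *\<^sub>R x 1 + (1 - c) *\<^sub>R J - x 1 = (c - 1) *\<^sub>R (x 1 - J)"
    by (simp add: algebra_simps)
  show ?thesis
  proof (cases "i = 1")
    case True
    then show ?thesis using g q1 unfolding reloc_def Let_def c1 by (simp add: J_def c_def)
  next
    case False
    have "c *\<^sub>R (x i - x 1) + (c *\<^sub>R x 1 + (1 - c) *\<^sub>R J) - x i = (c - 1) *\<^sub>R (x i - J)"
      by (simp add: algebra_simps)
    moreover have "(x i - x 1) + x 1 = x i" by simp
    ultimately show ?thesis using g False unfolding reloc_def Let_def c1 by (simp add: J_def c_def)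
  qed
qed

theorem lemma5p1:
  fixes A :: "nat \<Rightarrow> 'a::{real_inner, complete_space} \<Rightarrow> 'a set"
    and N :: nat and \<theta> :: real and \<Gamma> :: "real set"
    and S :: "((nat \<Rightarrow> 'a) \<times> real) set"
  assumes "N \<ge> 2"
    and "\<forall>i\<in>{1..N}. max_monotone (A i)"
    and "0 < \<theta>" and "\<theta> < 1"
    and "\<Gamma> \<noteq> {}" and "is_interval \<Gamma>" and "closed \<Gamma>" and "\<Gamma> \<subseteq> {0<..}"
    and "S \<noteq> {}"
    and "\<exists>M. \<forall>(x, \<gamma>)\<in>S. pnorm N x \<le> M \<and> \<bar>\<gamma>\<bar> \<le> M"
    and "S \<subseteq> (\<Union>\<gamma>\<in>\<Gamma>. mt_fix N A \<theta> \<gamma> \<times> {\<gamma>})"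
  shows "\<exists>L \<ge> 0. \<forall>\<delta>\<in>\<Gamma>. \<forall>(x, \<gamma>)\<in>S.
           pnorm N (\<lambda>i. reloc A \<delta> \<gamma> x i - reloc A \<gamma> \<gamma> x i) \<le> L * \<bar>\<delta> - \<gamma>\<bar>"
proof -
  obtain M where M: "\<And>x \<gamma>. (x, \<gamma>) \<in> S \<Longrightarrow> pnorm N x \<le> M \<and> \<bar>\<gamma>\<bar> \<le> M"
    using assms(10) by blast
  obtain s0 where "s0 \<in> S" using assms(9) by blast
  then have M0: "M \<ge> 0" using M[of "fst s0" "snd s0"] by auto
  define g0 where "g0 = Inf \<Gamma>"
  have "\<forall>x\<in>\<Gamma>. 0 \<le> x" using assms(8) by (auto simp: subset_iff less_imp_le)
  then have bddG: "bdd_below \<Gamma>" unfolding bdd_below_def by blast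
  have "g0 \<in> \<Gamma>" unfolding g0_def by (rule closed_contains_Inf[OF assms(5) bddG assms(7)])
  then have g0pos: "g0 > 0" using assms(8) by auto
  have g0le: "g0 \<le> \<gamma>" if "\<gamma> \<in> \<Gamma>" for \<gamma> unfolding g0_def using bddG that by (rule cInf_lower[rotated])
  have mm1: "max_monotone (A 1)" using assms(1,2) by auto
  obtain y0 where y0: "- y0 \<in> A 1 y0" using minty0[OF mm1] by blast
  define K where "K = 2 * norm y0 + M + M * norm y0"
  define L where "L = real (N - 1) * (M + K) / g0"
  have K0: "K \<ge> 0" unfolding K_def using M0 by simp
  have L0: "L \<ge> 0" unfolding L_def using M0 K0 g0pos by simp
  have I1: "1 \<in> {1..N-1}" using assms(1) by auto
  show ?thesis
  proof (intro exI[of _ L] conjI L0 ballI, clarify)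
    fix \<delta> x \<gamma> assume d: "\<delta> \<in> \<Gamma>" and xS: "(x, \<gamma>) \<in> S"
    have gG: "\<gamma> \<in> \<Gamma>" using xS assms(11) by auto
    have gg0: "g0 \<le> \<gamma>" using g0le[OF gG] .
    have gpos: "\<gamma> > 0" using gg0 g0pos by simp
    have px: "pnorm N x \<le> M" and gM: "\<gamma> \<le> M" using M[OF xS] by auto
    have pL2: "pnorm N f = L2_set (\<lambda>i. norm (f i)) {1..N-1}" for f :: "nat \<Rightarrow> 'a"
      unfolding pnorm_def L2_set_def by simp
    have xi: "norm (x i) \<le> M" if "i \<in> {1..N-1}" for i
      using member_le_L2_set[of "{1..N-1}" i "\<lambda>i. norm (x i)"] that px pL2[of x] by simp
    define J where "J = resolvent \<gamma> (A 1) (x 1)"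
    have "norm (J - y0) \<le> norm (x 1 - y0 - \<gamma> *\<^sub>R (- y0))"
      unfolding J_def by (rule resolvent_bound[OF mm1 gpos y0])
    also have "\<dots> \<le> norm (x 1) + norm y0 + \<gamma> * norm y0"
      by (smt (verit) norm_minus_cancel norm_scaleR norm_triangle_ineq4 norm_triangle_ineq abs_of_pos gpos)
    also have "\<dots> \<le> M + norm y0 + M * norm y0"
      using xi[OF I1] gM by (intro add_mono mult_right_mono) auto
    finally have "norm (J - y0) \<le> M + norm y0 + M * norm y0" .
    then have JK: "norm J \<le> K" unfolding K_def
      using norm_triangle_ineq2[of J y0] by linarith
    have "pnorm N (\<lambda>i. reloc A \<delta> \<gamma> x i - reloc A \<gamma> \<gamma> x i)
        = L2_set (\<lambda>i. (\<bar>\<delta> - \<gamma>\<bar> / \<gamma>) * norm (x i - J)) {1..N-1}"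
      unfolding pL2 reloc_diff[OF gpos[THEN less_imp_neq, symmetric]] J_def
      using gpos by (simp add: abs_div)
    also have "\<dots> = (\<bar>\<delta> - \<gamma>\<bar> / \<gamma>) * L2_set (\<lambda>i. norm (x i - J)) {1..N-1}"
      by (rule L2_set_right_distrib[symmetric]) (use gpos in simp)
    also have "\<dots> \<le> (\<bar>\<delta> - \<gamma>\<bar> / \<gamma>) * (real (N - 1) * (M + K))"
    proof (rule mult_left_mono)
      have "L2_set (\<lambda>i. norm (x i - J)) {1..N-1} \<le> (\<Sum>i\<in>{1..N-1}. norm (x i - J))"
        by (rule L2_set_le_sum) simp
      also have "\<dots> \<le> (\<Sum>i\<in>{1..N-1}. M + K)"
      proof (rule sum_mono)
        fix i assume "i \<in> {1..N-1}"
        then show "norm (x i - J) \<le> M + K" using xi[of i] JK norm_triangle_ineq4[of "x i" J] by linarith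
      qed
      also have "\<dots> = real (N - 1) * (M + K)" by simp
      finally show "L2_set (\<lambda>i. norm (x i - J)) {1..N-1} \<le> real (N - 1) * (M + K)" .
      show "0 \<le> \<bar>\<delta> - \<gamma>\<bar> / \<gamma>" using gpos by simp
    qed
    also have "\<dots> \<le> (\<bar>\<delta> - \<gamma>\<bar> / g0) * (real (N - 1) * (M + K))"
      using gpos g0pos gg0 M0 K0 by (intro mult_right_mono divide_left_mono) auto
    also have "\<dots> = L * \<bar>\<delta> - \<gamma>\<bar>" unfolding L_def by simp
    finally show "pnorm N (\<lambda>i. reloc A \<delta> \<gamma> x i - reloc A \<gamma> \<gamma> x i) \<le> L * \<bar>\<delta> - \<gamma>\<bar>" .
  qed
qed

end
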